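(* Let $\ell:\mathbb{R}^{m\times n}\to\mathbb{R}$ be differentiable and $L$-smooth with respect to the Frobenius norm, and suppose $\|\nabla \ell(W)\|_F\le G$ for all $W$. Let $U_r\in\mathbb{R}^{m\times r}$ have orthonormal columns and let $\Pi_{U_r}=U_rU_r^\top$ be the fixed rank-$r$ orthogonal projector. Fix a step size $\eta>0$ and an initial matrix $W_0\in\mathbb{R}^{m\times n}$. Define the unprojected gradient descent path $Z_0=W_0$, $Z_{t+1}=Z_t-\eta\nabla \ell(Z_t)$; the accumulated-projection iterate \[ W_T = W_0 - \eta\,\Pi_{U_r}\Bigl(\sum_{t=0}^{T-1}\nabla \ell(Z_t)\Bigr); \] and the sequential-projection iterates $P_0=W_0$, $P_{t+1}=P_t-\eta\,\Pi_{U_r}\nabla \ell(P_t)$. Then for any $T$, \[ \|W_T-P_T\|_F \le \frac{\eta^2}{2}\,L G\,T(T-1) + O\bigl((\eta L T)^3\bigr). \]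
   Context: A differentiable function $\ell:\mathbb{R}^{m\times n}\to\mathbb{R}$ is $L$-smooth with respect to the Frobenius norm $\|\cdot\|_F$ if $\|\nabla \ell(W_1)-\nabla \ell(W_2)\|_F \le L\,\|W_1-W_2\|_F$ for all $W_1,W_2\in\mathbb{R}^{m\times n}$. The term $O((\eta L T)^3)$ denotes a higher-order remainder as $\eta L T\to 0$. *)

theory Defs
  imports "HOL-Analysis.Analysis" "HOL-Library.Landau_Symbols"
begin

text \<open>Matrices in R^(m x n) are modelled as real^'n^'m; the norm on this type is
  the Frobenius norm and the inner product is the Frobenius inner product.\<close>

primrec gd_path :: "('a::real_vector \<Rightarrow> 'a) \<Rightarrow> real \<Rightarrow> 'a \<Rightarrow> nat \<Rightarrow> 'a" where
  "gd_path g \<eta> W0 0 = W0"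
| "gd_path g \<eta> W0 (Suc t) = gd_path g \<eta> W0 t - \<eta> *\<^sub>R g (gd_path g \<eta> W0 t)"

primrec seq_proj :: "('a \<Rightarrow> 'a) \<Rightarrow> ('a::real_vector \<Rightarrow> 'a) \<Rightarrow> real \<Rightarrow> 'a \<Rightarrow> nat \<Rightarrow> 'a" where
  "seq_proj Pr g \<eta> W0 0 = W0"
| "seq_proj Pr g \<eta> W0 (Suc t) = seq_proj Pr g \<eta> W0 t - \<eta> *\<^sub>R Pr (g (seq_proj Pr g \<eta> W0 t))"

end

theory Submission
  imports Defs
begin

lemma lin_mat: "linear (\<lambda>X::real^'n^'m. (A::real^'m^'k) ** X)"
  by (rule linearI) (simp_all add: matrix_matrix_mult_def vec_eq_iff sum_distrib_left
        algebra_simps sum.distrib)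

lemma inner_mat_adj:
  fixes A :: "real^'m^'k" and X :: "real^'n^'m" and Y :: "real^'n^'k"
  shows "(A ** X) \<bullet> Y = X \<bullet> (transpose A ** Y)"
proof -
  have "(A ** X) \<bullet> Y = (\<Sum>i\<in>UNIV. \<Sum>j\<in>UNIV. \<Sum>k\<in>UNIV. A$i$k * X$k$j * Y$i$j)"
    by (simp add: inner_vec_def matrix_matrix_mult_def sum_distrib_right)
  also have "\<dots> = (\<Sum>i\<in>UNIV. \<Sum>k\<in>UNIV. \<Sum>j\<in>UNIV. A$i$k * X$k$j * Y$i$j)"
    by (intro sum.cong refl, rule sum.swap)
  also have "\<dots> = (\<Sum>k\<in>UNIV. \<Sum>i\<in>UNIV. \<Sum>j\<in>UNIV. A$i$k * X$k$j * Y$i$j)"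
    by (rule sum.swap)
  also have "\<dots> = (\<Sum>k\<in>UNIV. \<Sum>j\<in>UNIV. \<Sum>i\<in>UNIV. A$i$k * X$k$j * Y$i$j)"
    by (intro sum.cong refl, rule sum.swap)
  also have "\<dots> = X \<bullet> (transpose A ** Y)"
    by (simp add: inner_vec_def matrix_matrix_mult_def sum_distrib_left transpose_def mult_ac)
  finally show ?thesis .
qed

lemma proj_norms:
  fixes P :: "real^'m^'m" and X :: "real^'n^'m"
  assumes sym: "transpose P = P" and idem: "P ** P = P"
  shows "norm (P ** X) \<le> norm X" "norm (X - P ** X) \<le> norm X"
proof -
  have orth: "(P ** X) \<bullet> (X - P ** X) = 0"
  proof -
    have "(P ** X) \<bullet> (P ** X) = X \<bullet> (P ** (P ** X))"
      using inner_mat_adj[of P X "P ** X"] sym by simp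
    also have "\<dots> = X \<bullet> (P ** X)" by (simp add: matrix_mul_assoc idem)
    finally show ?thesis by (simp add: inner_diff_right inner_commute)
  qed
  have "norm X ^ 2 = norm (P ** X + (X - P ** X)) ^ 2" by simp
  also have "\<dots> = norm (P ** X) ^ 2 + norm (X - P ** X) ^ 2"
    using orth unfolding power2_norm_eq_inner
    by (simp only: inner_add_left inner_add_right inner_commute[of "X - P ** X" "P ** X"])
  finally have e: "norm X ^ 2 = norm (P ** X) ^ 2 + norm (X - P ** X) ^ 2" .
  show "norm (P ** X) \<le> norm X"
    by (rule power2_le_imp_le) (use e in auto)
  show "norm (X - P ** X) \<le> norm X"
    by (rule power2_le_imp_le) (use e in auto)
qed

lemma n3: "norm (a - b - c) \<le> norm a + norm b + norm (c::'a::real_normed_vector)"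
  using norm_triangle_ineq4[of "a-b" c] norm_triangle_ineq4[of a b] by linarith

lemma sum_real_lt: "(\<Sum>t<T. real t) = real T * (real T - 1) / 2"
  by (induction T) (auto simp: field_simps)

lemma abstract_bound:
  fixes g Pr :: "'a::real_normed_vector \<Rightarrow> 'a"
  assumes lin: "linear Pr"
    and p1: "\<And>x. norm (Pr x) \<le> norm x"
    and p2: "\<And>x. norm (x - Pr x) \<le> norm x"
    and smooth: "\<forall>W1 W2. norm (g W1 - g W2) \<le> L * norm (W1 - W2)"
    and bounded: "\<forall>W. norm (g W) \<le> G"
    and L0: "L \<ge> 0" and eta: "\<eta> > 0"
  shows "norm ((W0 - \<eta> *\<^sub>R Pr (\<Sum>t<T. g (gd_path g \<eta> W0 t))) - seq_proj Pr g \<eta> W0 T)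
         \<le> \<eta>^2 / 2 * L * G * real T * (real T - 1) + \<eta>^3 * L^2 * G * real T ^ 3"
proof -
  define Z where "Z = gd_path g \<eta> W0"
  define P where "P = seq_proj Pr g \<eta> W0"
  define e where "e t = norm (Z t - P t)" for t
  have G0: "G \<ge> 0" using bounded norm_ge_zero order_trans by metis
  have ZS: "Z (Suc t) = Z t - \<eta> *\<^sub>R g (Z t)" for t by (simp add: Z_def)
  have PS: "P (Suc t) = P t - \<eta> *\<^sub>R Pr (g (P t))" for t by (simp add: P_def)
  have crude: "e t \<le> 2 * \<eta> * real t * G" for t
  proof (induction t)
    case 0 then show ?case by (simp add: e_def Z_def P_def)
  next
    case (Suc t)
    have "Z (Suc t) - P (Suc t) = (Z t - P t) - \<eta> *\<^sub>R (g (Z t) - Pr (g (P t)))"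
      by (simp add: ZS PS algebra_simps)
    then have "e (Suc t) \<le> e t + \<eta> * norm (g (Z t) - Pr (g (P t)))"
      unfolding e_def using norm_triangle_ineq4[of "Z t - P t" "\<eta> *\<^sub>R (g (Z t) - Pr (g (P t)))"] eta by simp
    also have "norm (g (Z t) - Pr (g (P t))) \<le> G + G"
      using norm_triangle_ineq4[of "g (Z t)" "Pr (g (P t))"] bounded[rule_format, of "Z t"] bounded[rule_format, of "P t"] p1[of "g (P t)"] by linarith
    finally show ?case using Suc eta by (simp add: algebra_simps)
  qed
  have refined: "e t \<le> \<eta> * real t * G + \<eta>^2 * L * G * real t * (real t - 1)" for t
  proof (induction t)
    case 0 then show ?case by (simp add: e_def Z_def P_def)
  next
    case (Suc t)
    have "Z (Suc t) - P (Suc t) = (Z t - P t) - \<eta> *\<^sub>R (g (Z t) - Pr (g (Z t)))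
             - \<eta> *\<^sub>R Pr (g (Z t) - g (P t))"
      by (simp add: ZS PS algebra_simps linear_diff[OF lin])
    then have "e (Suc t) \<le> e t + \<eta> * norm (g (Z t) - Pr (g (Z t)))
                 + \<eta> * norm (Pr (g (Z t) - g (P t)))"
      unfolding e_def using eta n3[of "Z t - P t" "\<eta> *\<^sub>R (g (Z t) - Pr (g (Z t)))" "\<eta> *\<^sub>R Pr (g (Z t) - g (P t))"]
      by simp
    also have "norm (g (Z t) - Pr (g (Z t))) \<le> G" using p2 bounded order_trans by metis
    also have "norm (Pr (g (Z t) - g (P t))) \<le> L * e t"
      using p1 smooth order_trans unfolding e_def by metis
    also have "L * e t \<le> L * (2 * \<eta> * real t * G)"
      using crude L0 by (simp add: mult_left_mono)
    finally have "e (Suc t) \<le> e t + \<eta> * G + \<eta> * (L * (2 * \<eta> * real t * G))"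
      using eta by (simp add: mult_left_mono)
    then show ?case using Suc by (simp add: algebra_simps power2_eq_square)
  qed
  have PT: "P T = W0 - \<eta> *\<^sub>R (\<Sum>t<T. Pr (g (P t)))" for T
    by (induction T) (simp_all add: P_def[symmetric] PS, simp add: P_def, simp add: algebra_simps)
  define S where "S = (\<Sum>t<T. (g (P t) - g (Z t)))"
  define A where "A = (\<Sum>t<T. real t)"
  define B where "B = (\<Sum>t<T. real t * (real t - 1))"
  have eqd: "(W0 - \<eta> *\<^sub>R Pr (\<Sum>t<T. g (Z t))) - P T = \<eta> *\<^sub>R Pr S"
  proof -
    have "Pr S = (\<Sum>t<T. Pr (g (P t))) - Pr (\<Sum>t<T. g (Z t))"
      unfolding S_def by (simp add: linear_sum[OF lin] linear_diff[OF lin] sum_subtractf)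
    then show ?thesis unfolding PT[of T] by (simp add: scaleR_diff_right)
  qed
  have D: "norm ((W0 - \<eta> *\<^sub>R Pr (\<Sum>t<T. g (Z t))) - P T) \<le> \<eta> * norm S"
    unfolding eqd using eta p1[of S] by (simp add: mult_left_mono)
  have S1: "norm S \<le> (\<Sum>t<T. L * e t)"
    unfolding S_def
    by (rule order_trans[OF norm_sum], rule sum_mono)
       (metis smooth norm_minus_commute e_def)
  have S2: "(\<Sum>t<T. L * e t) \<le> (\<Sum>t<T. L * (\<eta> * real t * G + \<eta>^2 * L * G * real t * (real t - 1)))"
    by (rule sum_mono, rule mult_left_mono[OF refined L0])
  have S3: "(\<Sum>t<T. L * (\<eta> * real t * G + \<eta>^2 * L * G * real t * (real t - 1)))
      = \<eta> * L * G * A + \<eta>^2 * L^2 * G * B"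
  proof -
    have "(\<Sum>t<T. L * (\<eta> * real t * G + \<eta>^2 * L * G * real t * (real t - 1)))
       = (\<Sum>t<T. (\<eta> * L * G) * real t + (\<eta>^2 * L^2 * G) * (real t * (real t - 1)))"
      by (rule sum.cong) (simp_all add: algebra_simps power2_eq_square)
    also have "\<dots> = \<eta> * L * G * A + \<eta>^2 * L^2 * G * B"
      unfolding A_def B_def sum.distrib sum_distrib_left[symmetric] ..
    finally show ?thesis .
  qed
  have Bb: "B \<le> real T ^ 3"
  proof -
    have "B \<le> (\<Sum>t<T. real T * real T)"
      unfolding B_def
    proof (rule sum_mono)
      fix t assume "t \<in> {..<T}"
      then have "real t \<le> real T" by simp
      then show "real t * (real t - 1) \<le> real T * real T"
      proof -
        have "real t * (real t - 1) \<le> real t * real t" by (simp add: mult_left_mono)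
        also have "\<dots> \<le> real T * real T" using \<open>real t \<le> real T\<close> by (intro mult_mono) auto
        finally show ?thesis .
      qed
    qed
    then show ?thesis by (simp add: power3_eq_cube)
  qed
  have c0: "\<eta>^3 * L^2 * G \<ge> 0" using eta G0 by simp
  have Bm: "\<eta>^3 * L^2 * G * B \<le> \<eta>^3 * L^2 * G * real T ^ 3"
    using mult_left_mono[OF Bb c0] .
  have "norm ((W0 - \<eta> *\<^sub>R Pr (\<Sum>t<T. g (Z t))) - P T) \<le> \<eta> * (\<eta> * L * G * A + \<eta>^2 * L^2 * G * B)"
    using D S1 S2 S3 eta by (smt (verit) mult_left_mono)
  also have "\<dots> = \<eta>^2 / 2 * L * G * real T * (real T - 1) + \<eta>^3 * L^2 * G * B"
    unfolding A_def sum_real_lt by (simp add: algebra_simps power2_eq_square power3_eq_cube)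
  finally show ?thesis
    using Bm unfolding Z_def P_def by linarith
qed

theorem theorem2:
  fixes loss :: "real^'n^'m \<Rightarrow> real"
    and g :: "real^'n^'m \<Rightarrow> real^'n^'m"
    and L G :: real
    and U :: "real^'r^'m"
    and W0 :: "real^'n^'m"
    and T :: nat
  assumes grad: "\<forall>W. (loss has_derivative (\<lambda>H. g W \<bullet> H)) (at W)"
    and smooth: "\<forall>W1 W2. norm (g W1 - g W2) \<le> L * norm (W1 - W2)"
    and bounded: "\<forall>W. norm (g W) \<le> G"
    and orth: "transpose U ** U = mat 1"
  shows "\<exists>R :: real \<Rightarrow> real.
           R \<in> O[at_right 0](\<lambda>\<eta>. (\<eta> * L * real T) ^ 3) \<and>
           (\<forall>\<eta>>0.
              norm ((W0 - \<eta> *\<^sub>R ((U ** transpose U) ** (\<Sum>t<T. g (gd_path g \<eta> W0 t))))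
                    - seq_proj (\<lambda>X. (U ** transpose U) ** X) g \<eta> W0 T)
              \<le> \<eta>^2 / 2 * L * G * real T * (real T - 1) + R \<eta>)"
proof -
  define Pi where "Pi = U ** transpose U"
  have sym: "transpose Pi = Pi" unfolding Pi_def by (simp add: matrix_transpose_mul)
  have idem: "Pi ** Pi = Pi" unfolding Pi_def
    by (metis matrix_mul_assoc orth matrix_mul_rid)
  have L0: "L \<ge> 0"
  proof (rule ccontr)
    assume "\<not> L \<ge> 0"
    define X :: "real^'n^'m" where "X = (\<chi> i j. 1)"
    have "X \<noteq> 0" unfolding X_def by (simp add: vec_eq_iff)
    then have "norm (X - 0) > 0" by simp
    with \<open>\<not> L \<ge> 0\<close> have "L * norm (X - 0) < 0" by (simp add: mult_neg_pos)
    with smooth[rule_format, of X 0] show False by (smt (verit) norm_ge_zero)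
  qed
  define R where "R = (\<lambda>\<eta>::real. \<eta>^3 * L^2 * G * real T ^ 3)"
  have "R \<in> O[at_right 0](\<lambda>\<eta>. (\<eta> * L * real T) ^ 3)"
  proof (rule bigoI[where c = "\<bar>G\<bar> / \<bar>L\<bar>"])
    have "norm (R x) \<le> \<bar>G\<bar> / \<bar>L\<bar> * norm ((x * L * real T) ^ 3)" for x
    proof (cases "L = 0")
      case True then show ?thesis by (simp add: R_def)
    next
      case False
      then show ?thesis unfolding R_def
        using L0 by (cases "x \<ge> 0")
          (simp_all add: abs_mult power_abs power_mult_distrib power2_eq_square power3_eq_cube
             abs_of_nonneg abs_of_neg field_simps)
    qed
    then show "eventually (\<lambda>x. norm (R x) \<le> \<bar>G\<bar> / \<bar>L\<bar> * norm ((x * L * real T) ^ 3)) (at_right 0)"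
      by simp
  qed
  moreover have "\<forall>\<eta>>0.
              norm ((W0 - \<eta> *\<^sub>R ((U ** transpose U) ** (\<Sum>t<T. g (gd_path g \<eta> W0 t))))
                    - seq_proj (\<lambda>X. (U ** transpose U) ** X) g \<eta> W0 T)
              \<le> \<eta>^2 / 2 * L * G * real T * (real T - 1) + R \<eta>"
  proof (intro allI impI)
    fix \<eta> :: real assume eta: "\<eta> > 0"
    show "norm ((W0 - \<eta> *\<^sub>R ((U ** transpose U) ** (\<Sum>t<T. g (gd_path g \<eta> W0 t))))
                    - seq_proj (\<lambda>X. (U ** transpose U) ** X) g \<eta> W0 T)
              \<le> \<eta>^2 / 2 * L * G * real T * (real T - 1) + R \<eta>"
      unfolding R_def Pi_def[symmetric]
      by (rule abstract_bound[OF lin_mat proj_norms(1)[OF sym idem] proj_norms(2)[OF sym idem]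
            smooth bounded L0 eta])
  qed
  ultimately show ?thesis by blast
qed

end
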